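(* Let $m\ge2$, let $\eta$ be a primitive $m$-th root of unity, and let $F(x,y)=(x+y)^m$. Suppose $G(x,y)$ is a real polynomial such that $G(\eta x,\eta y)=G(x,y)$, $G=1$ on the line $x+y=1$, $G$ has only non-negative coefficients, $G(0,0)=0$, and $G$ has degree $Km$ for a positive integer $K$. Then there are real homogeneous polynomials $H_{jm}$ of degree $jm$ (or zero), $1\le j\le K-1$, such that $$G=(F-H_m)+(FH_m-H_{2m})+\dots+(FH_{(K-2)m}-H_{(K-1)m})+FH_{(K-1)m}$$ (for $K=1$ this reads $G=F$). If the $H_{jm}$ have non-negative coefficients, then $N(G)\ge Km+1$.
   Context: $N(q)$ denotes the number of distinct monomials with nonzero coefficient in the polynomial $q$. *)

theory Defs
  imports Complex_Main "HOL-Computational_Algebra.Polynomial"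
begin

text \<open>Real bivariate polynomials in x, y are represented as "real poly poly":
  a polynomial in x whose coefficients are polynomials in y.
  The coefficient of the monomial x^i y^j of p is bcoeff p i j.\<close>

type_synonym bipoly = "real poly poly"

definition bcoeff :: "bipoly \<Rightarrow> nat \<Rightarrow> nat \<Rightarrow> real" where
  "bcoeff p i j = coeff (coeff p i) j"

definition bsupp :: "bipoly \<Rightarrow> (nat \<times> nat) set" where
  "bsupp p = {(i, j). bcoeff p i j \<noteq> 0}"

definition Nmon :: "bipoly \<Rightarrow> nat" where
  "Nmon q = card (bsupp q)"

definition beval :: "bipoly \<Rightarrow> 'a::real_algebra_1 \<Rightarrow> 'a \<Rightarrow> 'a" where
  "beval p x y = (\<Sum>i\<le>degree p. \<Sum>j\<le>degree (coeff p i).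
                   of_real (bcoeff p i j) * x ^ i * y ^ j)"

text \<open>Total degree (0 for the zero polynomial).\<close>
definition tdeg :: "bipoly \<Rightarrow> nat" where
  "tdeg p = Max (insert 0 ((\<lambda>(i, j). i + j) ` bsupp p))"

definition homog :: "nat \<Rightarrow> bipoly \<Rightarrow> bool" where
  "homog d p \<longleftrightarrow> (\<forall>i j. bcoeff p i j \<noteq> 0 \<longrightarrow> i + j = d)"

definition nonneg_coeffs :: "bipoly \<Rightarrow> bool" where
  "nonneg_coeffs p \<longleftrightarrow> (\<forall>i j. bcoeff p i j \<ge> 0)"

definition varX :: bipoly where "varX = [:0, 1:]"
definition varY :: bipoly where "varY = [:[:0, 1:]:]"

end

theory Submission imports Defs begin

lemma bpoly_eqI: "(\<And>i j. bcoeff p i j = bcoeff q i j) \<Longrightarrow> p = q"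
  by (simp add: bcoeff_def poly_eq_iff)

lemma bcoeff_add[simp]: "bcoeff (p + q) i j = bcoeff p i j + bcoeff q i j"
  by (simp add: bcoeff_def)
lemma bcoeff_diff[simp]: "bcoeff (p - q) i j = bcoeff p i j - bcoeff q i j"
  by (simp add: bcoeff_def)
lemma bcoeff_minus[simp]: "bcoeff (- p) i j = - bcoeff p i j"
  by (simp add: bcoeff_def)
lemma bcoeff_0[simp]: "bcoeff 0 i j = 0"
  by (simp add: bcoeff_def)
lemma bcoeff_1: "bcoeff 1 i j = (if i = 0 \<and> j = 0 then 1 else 0)"
  by (cases i; cases j) (simp_all add: bcoeff_def one_pCons coeff_pCons)
lemma bcoeff_sum: "bcoeff (\<Sum>x\<in>A. p x) i j = (\<Sum>x\<in>A. bcoeff (p x) i j)"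
  by (simp add: bcoeff_def coeff_sum)
lemma bcoeff_mult: "bcoeff (p * q) i j = (\<Sum>a\<le>i. \<Sum>b\<le>j. bcoeff p a b * bcoeff q (i - a) (j - b))"
  by (simp add: bcoeff_def coeff_mult coeff_sum)

lemma bcoeff_varX_mult: "bcoeff (varX * p) i j = (if i = 0 then 0 else bcoeff p (i - 1) j)"
  by (cases i) (simp_all add: bcoeff_def varX_def)
lemma bcoeff_varY_mult: "bcoeff (varY * p) i j = (if j = 0 then 0 else bcoeff p i (j - 1))"
  by (cases j) (simp_all add: bcoeff_def varY_def coeff_pCons)

lemma bcoeff_F: "bcoeff ((varX + varY) ^ m) i j = (if i + j = m then real (m choose i) else 0)"
proof (induction m arbitrary: i j)
  case 0
  then show ?case by (simp add: bcoeff_1)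
next
  case (Suc m)
  have "bcoeff ((varX + varY) ^ Suc m) i j = bcoeff (varX * (varX + varY) ^ m) i j + bcoeff (varY * (varX + varY) ^ m) i j"
    by (simp add: distrib_right)
  also have "\<dots> = (if i + j = Suc m then real (Suc m choose i) else 0)"
    unfolding bcoeff_varX_mult bcoeff_varY_mult Suc.IH
    by (cases i; cases j) auto
  finally show ?case .
qed


lemma homog_0[simp]: "homog d 0" by (simp add: homog_def)
lemma homog_1: "homog 0 1" by (simp add: homog_def bcoeff_1)
lemma homog_add: "homog d p \<Longrightarrow> homog d q \<Longrightarrow> homog d (p + q)"
  unfolding homog_def by (metis add_0 bcoeff_add)
lemma homog_diff: "homog d p \<Longrightarrow> homog d q \<Longrightarrow> homog d (p - q)"
  unfolding homog_def by (metis diff_self bcoeff_diff)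
lemma homog_sum: "(\<And>x. x \<in> A \<Longrightarrow> homog d (p x)) \<Longrightarrow> homog d (\<Sum>x\<in>A. p x)"
  by (induction A rule: infinite_finite_induct) (auto intro: homog_add)
lemma homog_mult: assumes "homog d p" "homog e q" shows "homog (d + e) (p * q)"
  unfolding homog_def
proof (intro allI impI)
  fix i j assume "bcoeff (p * q) i j \<noteq> 0"
  then obtain a b where ab: "a \<le> i" "b \<le> j" "bcoeff p a b * bcoeff q (i - a) (j - b) \<noteq> 0"
    unfolding bcoeff_mult by (meson atMost_iff sum.neutral)
  then have "a + b = d" "(i - a) + (j - b) = e" using assms unfolding homog_def by auto
  then show "i + j = d + e" using ab by linarith
qed
lemma homog_power: "homog d p \<Longrightarrow> homog (n * d) (p ^ n)"
  by (induction n) (auto simp: homog_1 dest: homog_mult)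
lemma homog_F: "homog m ((varX + varY) ^ m)"
  by (simp add: homog_def bcoeff_F)

definition hp :: "nat \<Rightarrow> bipoly \<Rightarrow> bipoly" where
  "hp d p = (\<Sum>i\<le>d. monom (monom (bcoeff p i (d - i)) (d - i)) i)"

lemma bcoeff_hp: "bcoeff (hp d p) i j = (if i + j = d then bcoeff p i j else 0)"
proof -
  have "bcoeff (hp d p) i j = (\<Sum>k\<le>d. if k = i then coeff (monom (bcoeff p k (d - k)) (d - k)) j else 0)"
    unfolding hp_def bcoeff_sum by (intro sum.cong) (auto simp: bcoeff_def coeff_monom)
  also have "\<dots> = (if i \<le> d then coeff (monom (bcoeff p i (d - i)) (d - i)) j else 0)"
    by (simp add: sum.delta)
  also have "\<dots> = (if i + j = d then bcoeff p i j else 0)"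
    by (auto simp: coeff_monom)
  finally show ?thesis .
qed

lemma homog_hp: "homog d (hp d p)" by (simp add: homog_def bcoeff_hp)

lemma finite_bsupp: "finite (bsupp p)"
proof -
  have "bsupp p \<subseteq> (\<Union>i\<le>degree p. {i} \<times> {..degree (coeff p i)})"
  proof
    fix x assume "x \<in> bsupp p"
    then obtain i j where x: "x = (i, j)" "coeff (coeff p i) j \<noteq> 0" by (auto simp: bsupp_def bcoeff_def)
    then have "i \<le> degree p" "j \<le> degree (coeff p i)"
      by (auto intro: le_degree)
    then show "x \<in> (\<Union>i\<le>degree p. {i} \<times> {..degree (coeff p i)})" using x by auto
  qed
  then show ?thesis by (rule finite_subset) auto
qed

lemma bsupp_bound: "\<exists>n. \<forall>i j. bcoeff p i j \<noteq> 0 \<longrightarrow> i \<le> n \<and> j \<le> n"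
proof -
  obtain n where "\<forall>x\<in>fst ` bsupp p \<union> snd ` bsupp p. x \<le> n"
    using finite_bsupp[of p] by (metis finite_Un finite_imageI finite_nat_set_iff_bounded_le)
  note n = this
  show ?thesis
  proof (intro exI allI impI)
    fix i j assume "bcoeff p i j \<noteq> 0"
    then have "(i,j) \<in> bsupp p" by (simp add: bsupp_def)
    then have "i \<in> fst ` bsupp p" "j \<in> snd ` bsupp p" by force+
    then show "i \<le> n \<and> j \<le> n" using n by auto
  qed
qed

lemma sum_atMost_eq:
  fixes a b :: nat
  assumes "\<And>j. a < j \<Longrightarrow> f j = 0" "\<And>j. b < j \<Longrightarrow> f j = 0"
  shows "(\<Sum>j\<le>a. f j) = (\<Sum>j\<le>b. f j)"
proof -
  have "(\<Sum>j\<le>a. f j) = (\<Sum>j\<le>max a b. f j)"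
    by (rule sum.mono_neutral_left) (auto intro: assms simp: not_le)
  moreover have "(\<Sum>j\<le>b. f j) = (\<Sum>j\<le>max a b. f j)"
    by (rule sum.mono_neutral_left) (auto intro: assms simp: not_le)
  ultimately show ?thesis by simp
qed

lemma beval_box:
  assumes "\<forall>i j. bcoeff p i j \<noteq> 0 \<longrightarrow> i \<le> n \<and> j \<le> n"
  shows "beval p x y = (\<Sum>i\<le>n. \<Sum>j\<le>n. of_real (bcoeff p i j) * x ^ i * y ^ j)"
proof -
  have z: "bcoeff p i j = 0" if "n < i \<or> n < j" for i j using assms that by force
  have inner: "(\<Sum>j\<le>degree (coeff p i). of_real (bcoeff p i j) * x ^ i * y ^ j) =
     (\<Sum>j\<le>n. of_real (bcoeff p i j) * x ^ i * y ^ j)" for i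
    by (rule sum_atMost_eq) (auto simp: z, auto simp: bcoeff_def coeff_eq_0)
  have "beval p x y = (\<Sum>i\<le>degree p. \<Sum>j\<le>n. of_real (bcoeff p i j) * x ^ i * y ^ j)"
    unfolding beval_def inner ..
  also have "\<dots> = (\<Sum>i\<le>n. \<Sum>j\<le>n. of_real (bcoeff p i j) * x ^ i * y ^ j)"
    by (rule sum_atMost_eq) (auto simp: z, auto simp: bcoeff_def coeff_eq_0)
  finally show ?thesis .
qed


definition ev :: "real \<Rightarrow> bipoly \<Rightarrow> real poly" where
  "ev y p = map_poly (\<lambda>c. poly c y) p"

lemma coeff_ev[simp]: "coeff (ev y p) i = poly (coeff p i) y"
  by (simp add: ev_def coeff_map_poly)
lemma ev_add: "ev y (p + q) = ev y p + ev y q"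
  by (simp add: poly_eq_iff)
lemma ev_diff: "ev y (p - q) = ev y p - ev y q"
  by (simp add: poly_eq_iff)
lemma ev_mult: "ev y (p * q) = ev y p * ev y q"
  by (simp add: poly_eq_iff coeff_mult poly_sum)
lemma ev_1: "ev y 1 = 1"
  by (simp add: poly_eq_iff coeff_1)
lemma ev_power: "ev y (p ^ n) = ev y p ^ n"
  by (induction n) (simp_all add: ev_1 ev_mult)
lemma ev_sum: "ev y (\<Sum>x\<in>A. p x) = (\<Sum>x\<in>A. ev y (p x))"
  by (simp add: poly_eq_iff coeff_sum poly_sum)

lemma poly_le:
  fixes q :: "'a::comm_semiring_1 poly"
  assumes "\<And>i. n < i \<Longrightarrow> coeff q i = 0"
  shows "poly q x = (\<Sum>i\<le>n. coeff q i * x ^ i)"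
  by (subst poly_altdef, rule sum_atMost_eq) (auto simp: coeff_eq_0 assms)

lemma beval_real: "beval p (x::real) y = poly (ev y p) x"
proof -
  obtain n where n: "\<forall>i j. bcoeff p i j \<noteq> 0 \<longrightarrow> i \<le> n \<and> j \<le> n" using bsupp_bound by blast
  have z: "bcoeff p i j = 0" if "n < i \<or> n < j" for i j using n that by force
  have zc: "coeff p i = 0" if "n < i" for i using z that by (auto simp: poly_eq_iff bcoeff_def)
  have "poly (ev y p) x = (\<Sum>i\<le>n. coeff (ev y p) i * x ^ i)"
    by (rule poly_le) (simp add: zc)
  also have "\<dots> = (\<Sum>i\<le>n. poly (coeff p i) y * x ^ i)" by simp
  also have "\<dots> = (\<Sum>i\<le>n. (\<Sum>j\<le>n. bcoeff p i j * y ^ j) * x ^ i)"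
  proof -
    have pc: "poly (coeff p i) y = (\<Sum>j\<le>n. bcoeff p i j * y ^ j)" for i
      unfolding bcoeff_def by (rule poly_le) (use z in \<open>auto simp: bcoeff_def\<close>)
    show ?thesis by (simp add: pc)
  qed
  also have "\<dots> = (\<Sum>i\<le>n. \<Sum>j\<le>n. of_real (bcoeff p i j) * x ^ i * y ^ j)"
    by (simp add: sum_distrib_right sum_distrib_left mult_ac)
  finally show ?thesis using beval_box[OF n, of x y] by simp
qed

lemma beval_add: "beval (p + q) (x::real) y = beval p x y + beval q x y"
  by (simp add: beval_real ev_add)
lemma beval_diff: "beval (p - q) (x::real) y = beval p x y - beval q x y"
  by (simp add: beval_real ev_diff)
lemma beval_mult: "beval (p * q) (x::real) y = beval p x y * beval q x y"
  by (simp add: beval_real ev_mult)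
lemma beval_power: "beval (p ^ n) (x::real) y = beval p x y ^ n"
  by (simp add: beval_real ev_power)
lemma beval_sum: "beval (\<Sum>k\<in>A. p k) (x::real) y = (\<Sum>k\<in>A. beval (p k) x y)"
  by (simp add: beval_real ev_sum poly_sum)
lemma ev_varX: "ev y varX = [:0, 1:]"
  by (simp add: poly_eq_iff varX_def coeff_pCons split: nat.split)
lemma ev_varY: "ev y varY = [:y:]"
  by (simp add: poly_eq_iff varY_def coeff_pCons split: nat.split)
lemma beval_F: "beval ((varX + varY) ^ m) (x::real) y = (x + y) ^ m"
  by (simp add: beval_real ev_power ev_add ev_varX ev_varY add.commute)
lemma beval_00: "beval p (0::real) 0 = bcoeff p 0 0"
  by (simp add: beval_real poly_0_coeff_0 bcoeff_def)

lemma beval_homog: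
  assumes "homog d p"
  shows "beval p (s * x) (s * y) = s ^ d * beval p x (y::'a::{real_algebra_1,comm_ring_1})"
proof -
  obtain n where n: "\<forall>i j. bcoeff p i j \<noteq> 0 \<longrightarrow> i \<le> n \<and> j \<le> n" using bsupp_bound by blast
  have "beval p (s * x) (s * y) = (\<Sum>i\<le>n. \<Sum>j\<le>n. of_real (bcoeff p i j) * (s * x) ^ i * (s * y) ^ j)"
    by (rule beval_box[OF n])
  also have "\<dots> = (\<Sum>i\<le>n. \<Sum>j\<le>n. s ^ d * (of_real (bcoeff p i j) * x ^ i * y ^ j))"
  proof (intro sum.cong refl)
    fix i j
    show "of_real (bcoeff p i j) * (s * x) ^ i * (s * y) ^ j = s ^ d * (of_real (bcoeff p i j) * x ^ i * y ^ j)"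
    proof (cases "bcoeff p i j = 0")
      case False
      then have "d = i + j" using assms by (simp add: homog_def)
      then show ?thesis by (simp add: power_mult_distrib power_add mult_ac)
    qed simp
  qed
  also have "\<dots> = s ^ d * beval p x y"
    by (simp add: beval_box[OF n] sum_distrib_left)
  finally show ?thesis .
qed

lemma identity2:
  fixes c :: "nat \<Rightarrow> nat \<Rightarrow> 'a::idom"
  assumes inf: "\<forall>y. infinite {x. (\<Sum>i\<le>n. \<Sum>j\<le>n. c i j * x ^ i * y ^ j) = 0}"
    and U: "infinite (UNIV :: 'a set)"
    and ij: "i \<le> n" "j \<le> n"
  shows "c i j = 0"
proof -
  have A: "(\<Sum>j\<le>n. c i j * y ^ j) = 0" for y
  proof -
    define q where "q = (\<Sum>i\<le>n. monom (\<Sum>j\<le>n. c i j * y ^ j) i)"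
    have "poly q x = (\<Sum>i\<le>n. \<Sum>j\<le>n. c i j * x ^ i * y ^ j)" for x
      by (simp add: q_def poly_sum poly_monom sum_distrib_right sum_distrib_left mult_ac)
    then have "q = 0" using inf poly_roots_finite[of q] by auto
    then have "coeff q i = 0" by simp
    then show ?thesis using ij by (simp add: q_def coeff_sum coeff_monom)
  qed
  define r where "r = (\<Sum>j\<le>n. monom (c i j) j)"
  have "poly r y = 0" for y using A[of y] by (simp add: r_def poly_sum poly_monom)
  then have "r = 0" using U poly_roots_finite[of r] by auto
  then have "coeff r j = 0" by simp
  then show ?thesis using ij by (simp add: r_def coeff_sum coeff_monom)
qed


lemma nonneg_F: "nonneg_coeffs ((varX + varY) ^ m)"
  by (simp add: nonneg_coeffs_def bcoeff_F)

lemma bcoeff_mult_ge: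
  assumes "nonneg_coeffs p" "nonneg_coeffs q"
  shows "bcoeff p s t * bcoeff q i j \<le> bcoeff (p * q) (s + i) (t + j)"
proof -
  have nn: "0 \<le> bcoeff p a b * bcoeff q c d" for a b c d
    using assms by (simp add: nonneg_coeffs_def)
  have "bcoeff p s t * bcoeff q i j \<le> (\<Sum>b\<le>t + j. bcoeff p s b * bcoeff q (s + i - s) (t + j - b))"
    using member_le_sum[of t "{..t+j}" "\<lambda>b. bcoeff p s b * bcoeff q (s + i - s) (t + j - b)"] nn by simp
  also have "\<dots> \<le> (\<Sum>a\<le>s + i. \<Sum>b\<le>t + j. bcoeff p a b * bcoeff q (s + i - a) (t + j - b))"
    by (rule member_le_sum) (auto intro: sum_nonneg nn)
  finally show ?thesis by (simp add: bcoeff_mult)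
qed

lemma exists_nonzero: "p \<noteq> 0 \<Longrightarrow> \<exists>i j. bcoeff p i j \<noteq> 0"
  using bpoly_eqI[of p 0] by auto

lemma card_FH:
  assumes nnH: "nonneg_coeffs H" and "H \<noteq> 0"
  shows "card (bsupp H) + m \<le> card (bsupp ((varX + varY) ^ m * H))"
proof -
  define P where "P = (varX + varY) ^ m * H"
  have ge: "bcoeff ((varX + varY) ^ m) s t * bcoeff H i j \<le> bcoeff P (s + i) (t + j)" for s t i j
    unfolding P_def by (rule bcoeff_mult_ge[OF nonneg_F nnH])
  have pos: "bcoeff H i j > 0" if "(i, j) \<in> bsupp H" for i j
    using that nnH by (simp add: bsupp_def nonneg_coeffs_def order_less_le)
  have ne: "bsupp H \<noteq> {}" using exists_nonzero[OF assms(2)] by (auto simp: bsupp_def)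
  define a where "a = Max (fst ` bsupp H)"
  have "a \<in> fst ` bsupp H" unfolding a_def using ne finite_bsupp by (intro Max_in) auto
  then obtain b where ab: "(a, b) \<in> bsupp H" by force
  have amax: "i \<le> a" if "(i, j) \<in> bsupp H" for i j
    unfolding a_def using that finite_bsupp by (intro Max_ge) force+
  define S where "S = (\<lambda>(i, j). (i, j + m)) ` bsupp H"
  define T where "T = (\<lambda>t. (a + t, b + m - t)) ` {1..m}"
  have cS: "card S = card (bsupp H)"
    unfolding S_def by (rule card_image) (auto simp: inj_on_def)
  have cT: "card T = m"
    unfolding T_def by (subst card_image) (auto simp: inj_on_def)
  have SP: "S \<subseteq> bsupp P"
  proof
    fix x assume "x \<in> S"
    then obtain i j where x: "x = (i, j + m)" "(i, j) \<in> bsupp H" unfolding S_def by auto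
    have "0 < bcoeff H i j" using pos x(2) .
    also have "\<dots> = bcoeff ((varX + varY) ^ m) 0 m * bcoeff H i j" by (simp add: bcoeff_F)
    also have "\<dots> \<le> bcoeff P (0 + i) (m + j)" by (rule ge)
    finally show "x \<in> bsupp P" using x by (simp add: bsupp_def add.commute)
  qed
  have TP: "T \<subseteq> bsupp P"
  proof
    fix x assume "x \<in> T"
    then obtain t where x: "x = (a + t, b + m - t)" "1 \<le> t" "t \<le> m" unfolding T_def by auto
    have "0 < real (m choose t) * bcoeff H a b" using pos[OF ab] x by simp
    also have "\<dots> = bcoeff ((varX + varY) ^ m) t (m - t) * bcoeff H a b" using x by (simp add: bcoeff_F)
    also have "\<dots> \<le> bcoeff P (t + a) (m - t + b)" by (rule ge)
    finally show "x \<in> bsupp P" using x by (simp add: bsupp_def add.commute)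
  qed
  have disj: "S \<inter> T = {}"
    unfolding S_def T_def using amax by fastforce
  have "card (bsupp H) + m = card (S \<union> T)"
    using cS cT disj by (simp add: card_Un_disjoint S_def T_def finite_bsupp)
  also have "\<dots> \<le> card (bsupp P)"
    using SP TP by (intro card_mono finite_bsupp) auto
  finally show ?thesis unfolding P_def .
qed

lemma telescope:
  fixes a h :: "nat \<Rightarrow> nat"
  assumes "\<And>j. j < K \<Longrightarrow> h j + m \<le> a j + h (Suc j)"
  shows "h 0 + K * m \<le> (\<Sum>j<K. a j) + h K"
  using assms by (induction K) (auto, fastforce)


theorem theorem4p1:
  fixes m K :: nat and \<eta> :: complex and G :: bipoly
  assumes "m \<ge> 2"
    and "\<eta> ^ m = 1" and "\<forall>k. 0 < k \<and> k < m \<longrightarrow> \<eta> ^ k \<noteq> 1"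
    and "\<forall>x y :: complex. beval G (\<eta> * x) (\<eta> * y) = beval G x y"
    and "\<forall>x y :: real. x + y = 1 \<longrightarrow> beval G x y = 1"
    and "nonneg_coeffs G"
    and "beval G (0::real) 0 = 0"
    and "K > 0" and "tdeg G = K * m"
  shows "\<exists>H :: nat \<Rightarrow> bipoly.
           (\<forall>j\<in>{1..K-1}. homog (j * m) (H j)) \<and>
           G = (\<Sum>j<K. (varX + varY) ^ m * (if j = 0 then 1 else H j)
                        - (if j + 1 = K then 0 else H (j + 1))) \<and>
           ((\<forall>j\<in>{1..K-1}. nonneg_coeffs (H j)) \<longrightarrow> Nmon G \<ge> K * m + 1)"
proof -
  note prim = assms(3)
  define F where "F = (varX + varY) ^ m"
  define Gk where "Gk k = hp (k * m) G" for k
  have m0: "m > 0" using assms(1) by simp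
  obtain n where n: "\<forall>i j. bcoeff G i j \<noteq> 0 \<longrightarrow> i \<le> n \<and> j \<le> n" using bsupp_bound by blast
  have sym: "m dvd (i + j)" if "bcoeff G i j \<noteq> 0" for i j
  proof -
    define c where "c i j = (\<eta> ^ (i + j) - 1) * of_real (bcoeff G i j)" for i j
    have "(\<Sum>i\<le>n. \<Sum>j\<le>n. c i j * x ^ i * y ^ j) = 0" for x y :: complex
    proof -
      have "(\<Sum>i\<le>n. \<Sum>j\<le>n. c i j * x ^ i * y ^ j) = beval G (\<eta> * x) (\<eta> * y) - beval G x y"
      proof -
        have t: "c i j * x ^ i * y ^ j = of_real (bcoeff G i j) * (\<eta> * x) ^ i * (\<eta> * y) ^ j
                   - of_real (bcoeff G i j) * x ^ i * y ^ j" for i j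
          by (simp add: c_def power_mult_distrib power_add algebra_simps)
        show ?thesis unfolding beval_box[OF n] by (simp add: t sum_subtractf)
      qed
      then show ?thesis using assms(4) by simp
    qed
    then have "c i j = 0"
      using identity2[where n=n and c=c and i=i and j=j] n that infinite_UNIV_char_0 by auto
    then have e: "\<eta> ^ (i + j) = 1" using that by (simp add: c_def)
    have "\<eta> ^ (i + j) = \<eta> ^ (m * ((i + j) div m) + (i + j) mod m)" by simp
    also have "\<dots> = (\<eta> ^ m) ^ ((i + j) div m) * \<eta> ^ ((i + j) mod m)"
      by (simp only: power_add power_mult)
    finally have "\<eta> ^ ((i + j) mod m) = 1" using e assms(2) by simp
    then have "(i + j) mod m = 0" using prim m0 by (meson mod_less_divisor neq0_conv)
    then show ?thesis by auto
  qed
  have G00: "bcoeff G 0 0 = 0" using assms(7) beval_00 by simp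
  have deg: "i + j \<le> K * m" if "bcoeff G i j \<noteq> 0" for i j
  proof -
    have "(i, j) \<in> bsupp G" using that by (simp add: bsupp_def)
    then have "i + j \<le> Max (insert 0 ((\<lambda>(i, j). i + j) ` bsupp G))"
      using finite_bsupp by (intro Max_ge) force+
    then show ?thesis using assms(9) by (simp add: tdeg_def)
  qed
  have top: "\<exists>i j. bcoeff G i j \<noteq> 0 \<and> i + j = K * m"
  proof -
    have "tdeg G \<in> insert 0 ((\<lambda>(i, j). i + j) ` bsupp G)"
      unfolding tdeg_def using finite_bsupp by (intro Max_in) auto
    moreover have "tdeg G \<noteq> 0" using assms(8,9) m0 by simp
    ultimately show ?thesis using assms(9) by (force simp: bsupp_def)
  qed
  have decomp: "G = (\<Sum>k\<in>{1..K}. Gk k)"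
  proof (rule bpoly_eqI)
    fix i j
    show "bcoeff G i j = bcoeff (\<Sum>k\<in>{1..K}. Gk k) i j"
    proof (cases "bcoeff G i j = 0")
      case True
      have "\<forall>k. (if i + j = k * m then bcoeff G i j else 0) = 0" using True by simp
      then show ?thesis unfolding bcoeff_sum Gk_def bcoeff_hp using True by simp
    next
      case False
      obtain q where q: "i + j = m * q" using sym[OF False] by (auto elim: dvdE)
      have q1: "1 \<le> q" using q False G00 by (cases q) auto
      have qK: "q \<le> K" using deg[OF False] q m0 by (simp add: mult.commute)
      have "bcoeff (\<Sum>k\<in>{1..K}. Gk k) i j = (\<Sum>k\<in>{1..K}. if k = q then bcoeff G i j else 0)"
        unfolding bcoeff_sum Gk_def bcoeff_hp q using m0 by (intro sum.cong) (auto simp: mult.commute)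
      also have "\<dots> = bcoeff G i j" using q1 qK by simp
      finally show ?thesis by simp
    qed
  qed
  have homGk: "homog (k * m) (Gk k)" for k by (simp add: Gk_def homog_hp)
  have homF: "homog m F" unfolding F_def by (rule homog_F)
  have homFp: "homog (k * m) (F ^ k)" for k using homog_power[OF homF] by simp
  have key: "(\<Sum>k\<in>{1..K}. F ^ (K - k) * Gk k) = F ^ K"
  proof -
    define Q where "Q = (\<Sum>k\<in>{1..K}. F ^ (K - k) * Gk k) - F ^ K"
    have homQ: "homog (K * m) Q"
      unfolding Q_def
    proof (intro homog_diff homog_sum homFp)
      fix k assume "k \<in> {1..K}"
      then have "(K - k) * m + k * m = K * m" by (simp add: add_mult_distrib[symmetric])
      then show "homog (K * m) (F ^ (K - k) * Gk k)" using homog_mult[OF homFp homGk] by metis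
    qed
    have line: "beval Q x y = 0" if "x + y = 1" for x y :: real
    proof -
      have "beval F x y = 1" using that by (simp add: F_def beval_F)
      then have "beval Q x y = (\<Sum>k\<in>{1..K}. beval (Gk k) x y) - 1"
        by (simp add: Q_def beval_diff beval_sum beval_mult beval_power)
      also have "\<dots> = beval G x y - 1"
      proof -
        have "beval (\<Sum>k\<in>{1..K}. Gk k) x y = (\<Sum>k\<in>{1..K}. beval (Gk k) x y)" by (rule beval_sum)
        then show ?thesis using decomp by simp
      qed
      finally show ?thesis using assms(5) that by simp
    qed
    have off: "beval Q x y = 0" if "x + y \<noteq> 0" for x y :: real
    proof -
      define s where "s = x + y"
      have "beval Q x y = beval Q (s * (x / s)) (s * (y / s))" using that by (simp add: s_def)
      also have "\<dots> = s ^ (K * m) * beval Q (x / s) (y / s)" by (rule beval_homog[OF homQ])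
      also have "beval Q (x / s) (y / s) = 0" using that
        by (intro line) (simp add: s_def add_divide_distrib[symmetric])
      finally show ?thesis by simp
    qed
    obtain nQ where nQ: "\<forall>i j. bcoeff Q i j \<noteq> 0 \<longrightarrow> i \<le> nQ \<and> j \<le> nQ" using bsupp_bound by blast
    have "Q = 0"
    proof (rule bpoly_eqI)
      fix i j
      show "bcoeff Q i j = bcoeff 0 i j"
      proof (cases "i \<le> nQ \<and> j \<le> nQ")
        case True
        have "infinite {x. (\<Sum>i\<le>nQ. \<Sum>j\<le>nQ. bcoeff Q i j * x ^ i * y ^ j) = 0}" for y :: real
        proof -
          have "UNIV - {- y} \<subseteq> {x. (\<Sum>i\<le>nQ. \<Sum>j\<le>nQ. bcoeff Q i j * x ^ i * y ^ j) = 0}"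
            using off beval_box[OF nQ, where 'a=real] by auto
          moreover have "infinite (UNIV - {- y} :: real set)" by (simp add: infinite_UNIV_char_0)
          ultimately show ?thesis using finite_subset by blast
        qed
        then show ?thesis using identity2[where n=nQ and c="bcoeff Q" and i=i and j=j] True infinite_UNIV_char_0 by auto
      next
        case False
        then show ?thesis using nQ by auto
      qed
    qed
    then show ?thesis by (simp add: Q_def)
  qed
  define Hs where "Hs j = F ^ j - (\<Sum>i\<in>{1..j}. F ^ (j - i) * Gk i)" for j
  have Hs0: "Hs 0 = 1" by (simp add: Hs_def)
  have HsK: "Hs K = 0" unfolding Hs_def key by simp
  have step: "F * Hs j = Hs (Suc j) + Gk (Suc j)" for j
  proof -
    have "F * (\<Sum>i\<in>{1..j}. F ^ (j - i) * Gk i) = (\<Sum>i\<in>{1..j}. F ^ (Suc j - i) * Gk i)"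
      unfolding sum_distrib_left
      by (intro sum.cong refl) (simp add: Suc_diff_le mult.assoc)
    then show ?thesis by (simp add: Hs_def right_diff_distrib)
  qed
  have homHs: "homog (j * m) (Hs j)" for j
    unfolding Hs_def
  proof (intro homog_diff homog_sum homFp)
    fix k assume "k \<in> {1..j}"
    then have "(j - k) * m + k * m = j * m" by (simp add: add_mult_distrib[symmetric])
    then show "homog (j * m) (F ^ (j - k) * Gk k)" using homog_mult[OF homFp homGk] by metis
  qed
  have eqn: "Gk (Suc j) = F * Hs j - Hs (Suc j)" for j using step[of j] by simp
  have sumeq: "(\<Sum>j<K. F * (if j = 0 then 1 else Hs j) - (if j + 1 = K then 0 else Hs (j + 1))) = G"
  proof -
    have "(\<Sum>j<K. F * (if j = 0 then 1 else Hs j) - (if j + 1 = K then 0 else Hs (j + 1)))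
        = (\<Sum>j<K. Gk (Suc j))"
      by (intro sum.cong refl) (auto simp: eqn Hs0 HsK)
    also have "\<dots> = G" using decomp by (simp add: sum.atLeast1_atMost_eq)
    finally show ?thesis .
  qed
  have part2: "Nmon G \<ge> K * m + 1" if nnA: "\<forall>j\<in>{1..K-1}. nonneg_coeffs (Hs j)"
  proof -
    have nnH: "nonneg_coeffs (Hs j)" if "j \<le> K" for j
    proof (cases "j = 0 \<or> j = K")
      case True then show ?thesis by (auto simp: Hs0 HsK nonneg_coeffs_def bcoeff_1)
    next
      case False then have "j \<in> {1..K-1}" using that by auto
      then show ?thesis using nnA by blast
    qed
    have nnG: "nonneg_coeffs (Gk k)" for k
      using assms(6) by (simp add: nonneg_coeffs_def Gk_def bcoeff_hp)
    have nz: "Hs j \<noteq> 0" if "j < K" for j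
    proof
      assume H0: "Hs j = 0"
      have "Hs (j + k) = 0" if "j + k < K" for k
        using that
      proof (induction k)
        case 0 then show ?case using H0 by simp
      next
        case (Suc k)
        then have z: "Hs (j + k) = 0" by simp
        have e: "Gk (Suc (j + k)) = - Hs (Suc (j + k))" using eqn[of "j + k"] z by simp
        show ?case
        proof (rule bpoly_eqI)
          fix a b
          have "0 \<le> bcoeff (Gk (Suc (j + k))) a b" using nnG by (simp add: nonneg_coeffs_def)
          moreover have "0 \<le> bcoeff (Hs (Suc (j + k))) a b" using nnH[of "Suc (j + k)"] Suc.prems
            by (simp add: nonneg_coeffs_def)
          ultimately show "bcoeff (Hs (j + Suc k)) a b = bcoeff 0 a b" using e
            by (metis add_Suc_right bcoeff_0 bcoeff_minus neg_0_le_iff_le order_antisym)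
        qed
      qed
      from this[of "K - 1 - j"] have "Hs (K - 1) = 0" using that by simp
      then have "Gk K = 0" using eqn[of "K - 1"] HsK assms(8) by simp
      moreover obtain i j where "bcoeff G i j \<noteq> 0" "i + j = K * m" using top by blast
      ultimately show False by (metis Gk_def bcoeff_0 bcoeff_hp)
    qed
    define a where "a j = card (bsupp (Gk (Suc j)))" for j
    define h where "h j = card (bsupp (Hs j))" for j
    have ineq: "h j + m \<le> a j + h (Suc j)" if "j < K" for j
    proof -
      have "h j + m \<le> card (bsupp (F * Hs j))"
        unfolding h_def F_def by (rule card_FH) (use nnH nz that F_def in auto)
      also have "\<dots> \<le> card (bsupp (Gk (Suc j)) \<union> bsupp (Hs (Suc j)))"
      proof (intro card_mono)
        show "finite (bsupp (Gk (Suc j)) \<union> bsupp (Hs (Suc j)))" by (simp add: finite_bsupp)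
        show "bsupp (F * Hs j) \<subseteq> bsupp (Gk (Suc j)) \<union> bsupp (Hs (Suc j))"
          using step[of j] by (auto simp: bsupp_def)
      qed
      also have "\<dots> \<le> a j + h (Suc j)" unfolding a_def h_def by (rule card_Un_le)
      finally show ?thesis .
    qed
    have "h 0 + K * m \<le> (\<Sum>j<K. a j) + h K" by (rule telescope) (use ineq in auto)
    moreover have "h 0 = 1"
    proof -
      have "bsupp (Hs 0) = {(0, 0)}" by (auto simp: Hs0 bsupp_def bcoeff_1)
      then show ?thesis by (simp add: h_def)
    qed
    moreover have "h K = 0" by (simp add: h_def HsK bsupp_def)
    moreover have "(\<Sum>j<K. a j) \<le> Nmon G"
    proof -
      have "(\<Sum>j<K. a j) = card (\<Union>j<K. bsupp (Gk (Suc j)))"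
        unfolding a_def
      proof (rule card_UN_disjoint[symmetric])
        show "\<forall>j\<in>{..<K}. \<forall>k\<in>{..<K}. j \<noteq> k \<longrightarrow> bsupp (Gk (Suc j)) \<inter> bsupp (Gk (Suc k)) = {}"
          using m0 by (auto simp: bsupp_def Gk_def bcoeff_hp)
      qed (auto simp: finite_bsupp)
      also have "\<dots> \<le> card (bsupp G)"
        by (intro card_mono finite_bsupp) (auto simp: bsupp_def Gk_def bcoeff_hp split: if_splits)
      finally show ?thesis by (simp add: Nmon_def)
    qed
    ultimately show ?thesis by linarith
  qed
  show ?thesis
    by (rule exI[of _ Hs]) (use homHs sumeq part2 F_def in auto)
qed

end
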